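(* There exists a $(\circ,\wedge,\mathsf{A})$-algebra that is representable by partial functions and atomic, but has no atomic representation (equivalently, no complete representation) by partial functions. For instance, let the base be $\{p\}\sqcup\mathbb{N}_\infty$ with $\mathbb{N}_\infty=\mathbb{N}\cup\{\infty\}$, let $\mathcal{S}$ be the set of subsets of $\mathbb{N}_\infty$ that are either finite and omit $\infty$, or cofinite and contain $\infty$, and let $\mathfrak{F}$ consist of the identity functions restricted to $A\cup B$ with $A\subseteq\{p\}$, $B\in\mathcal{S}$, together with the function $f=\{(p,\infty)\}$. Then $\mathfrak{F}$ is closed under composition, intersection and antidomain, is atomic, and has no complete representation by partial functions.
   Context: A $(\circ,\wedge,\mathsf{A})$-algebra is a set with two binary operations $\circ,\wedge$ and one unary operation $\mathsf{A}$. An algebra of partial functions of this signature is a set of partial functions, with base $X$ the union of all their domains and ranges, closed under: composition $f\circ g=\{(x,z)\mid \exists y\,(x,y)\in f,(y,z)\in g\}$; intersection; antidomain $\mathsf{A}(f)=\{(x,x)\mid x\in X, x\notin\mathrm{dom}(f)\}$. A representation by partial functions is an isomorphism onto such an algebra. The order is $a\le b\iff a\wedge b=a$, with least element $0$. An atom is a minimal nonzero element; the algebra is atomic if every nonzero element is above an atom. A representation $\theta$ is atomic if whenever $(x,y)\in\theta(a)$ for some $a$, then $(x,y)\in\theta(b)$ for some atom $b$. It is complete if for every nonempty $S$ with $\bigwedge S$ existing, $\theta(\bigwedge S)=\bigcap\theta[S]$ (equivalently for joins and unions). *)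

theory Defs
  imports Main
begin

definition base :: "('b \<times> 'b) set set \<Rightarrow> 'b set" where
  "base F = (\<Union>f\<in>F. Domain f \<union> Range f)"

definition antidom :: "'b set \<Rightarrow> ('b \<times> 'b) set \<Rightarrow> ('b \<times> 'b) set" where
  "antidom X f = {(x, x) | x. x \<in> X \<and> x \<notin> Domain f}"

definition pfun_alg :: "('b \<times> 'b) set set \<Rightarrow> bool" where
  "pfun_alg F \<longleftrightarrow> (\<forall>f\<in>F. single_valued f)
     \<and> (\<forall>f\<in>F. \<forall>g\<in>F. f O g \<in> F \<and> f \<inter> g \<in> F)
     \<and> (\<forall>f\<in>F. antidom (base F) f \<in> F)"

definition is_alg :: "'a set \<Rightarrow> ('a \<Rightarrow> 'a \<Rightarrow> 'a) \<Rightarrow> ('a \<Rightarrow> 'a \<Rightarrow> 'a) \<Rightarrow> ('a \<Rightarrow> 'a) \<Rightarrow> bool" where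
  "is_alg S cmp meet ad \<longleftrightarrow>
     (\<forall>a\<in>S. \<forall>b\<in>S. cmp a b \<in> S \<and> meet a b \<in> S) \<and> (\<forall>a\<in>S. ad a \<in> S)"

definition is_rep :: "'a set \<Rightarrow> ('a \<Rightarrow> 'a \<Rightarrow> 'a) \<Rightarrow> ('a \<Rightarrow> 'a \<Rightarrow> 'a) \<Rightarrow> ('a \<Rightarrow> 'a)
     \<Rightarrow> ('a \<Rightarrow> ('c \<times> 'c) set) \<Rightarrow> bool" where
  "is_rep S cmp meet ad \<theta> \<longleftrightarrow>
     is_alg S cmp meet ad \<and> inj_on \<theta> S \<and> pfun_alg (\<theta> ` S)
     \<and> (\<forall>a\<in>S. \<forall>b\<in>S. \<theta> (cmp a b) = \<theta> a O \<theta> b \<and> \<theta> (meet a b) = \<theta> a \<inter> \<theta> b)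
     \<and> (\<forall>a\<in>S. \<theta> (ad a) = antidom (base (\<theta> ` S)) (\<theta> a))"

definition leq :: "('a \<Rightarrow> 'a \<Rightarrow> 'a) \<Rightarrow> 'a \<Rightarrow> 'a \<Rightarrow> bool" where
  "leq meet a b \<longleftrightarrow> meet a b = a"

definition is_zero :: "'a set \<Rightarrow> ('a \<Rightarrow> 'a \<Rightarrow> 'a) \<Rightarrow> 'a \<Rightarrow> bool" where
  "is_zero S meet z \<longleftrightarrow> z \<in> S \<and> (\<forall>b\<in>S. leq meet z b)"

definition is_atom :: "'a set \<Rightarrow> ('a \<Rightarrow> 'a \<Rightarrow> 'a) \<Rightarrow> 'a \<Rightarrow> bool" where
  "is_atom S meet a \<longleftrightarrow> a \<in> S \<and> \<not> is_zero S meet a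
     \<and> (\<forall>b\<in>S. leq meet b a \<longrightarrow> b = a \<or> is_zero S meet b)"

definition atomic_alg :: "'a set \<Rightarrow> ('a \<Rightarrow> 'a \<Rightarrow> 'a) \<Rightarrow> bool" where
  "atomic_alg S meet \<longleftrightarrow>
     (\<forall>a\<in>S. \<not> is_zero S meet a \<longrightarrow> (\<exists>b. is_atom S meet b \<and> leq meet b a))"

definition atomic_rep :: "'a set \<Rightarrow> ('a \<Rightarrow> 'a \<Rightarrow> 'a) \<Rightarrow> ('a \<Rightarrow> ('c \<times> 'c) set) \<Rightarrow> bool" where
  "atomic_rep S meet \<theta> \<longleftrightarrow>
     (\<forall>a\<in>S. \<forall>p\<in>\<theta> a. \<exists>b. is_atom S meet b \<and> p \<in> \<theta> b)"

definition is_inf :: "'a set \<Rightarrow> ('a \<Rightarrow> 'a \<Rightarrow> 'a) \<Rightarrow> 'a set \<Rightarrow> 'a \<Rightarrow> bool" where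
  "is_inf S meet T m \<longleftrightarrow> m \<in> S \<and> (\<forall>t\<in>T. leq meet m t)
     \<and> (\<forall>c\<in>S. (\<forall>t\<in>T. leq meet c t) \<longrightarrow> leq meet c m)"

definition complete_rep :: "'a set \<Rightarrow> ('a \<Rightarrow> 'a \<Rightarrow> 'a) \<Rightarrow> ('a \<Rightarrow> ('c \<times> 'c) set) \<Rightarrow> bool" where
  "complete_rep S meet \<theta> \<longleftrightarrow>
     (\<forall>T m. T \<subseteq> S \<and> T \<noteq> {} \<and> is_inf S meet T m \<longrightarrow> \<theta> m = (\<Inter>t\<in>T. \<theta> t))"

text \<open>Base {p} \<squnion> (\<nat> \<union> {\<infinity>}).\<close>
datatype pt = P | N nat | Inf

definition Ninf :: "pt set" where
  "Ninf = range N \<union> {Inf}"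

definition Sfam :: "pt set set" where
  "Sfam = {B. B \<subseteq> Ninf \<and> ((finite B \<and> Inf \<notin> B) \<or> (finite (Ninf - B) \<and> Inf \<in> B))}"

definition fP :: "(pt \<times> pt) set" where
  "fP = {(P, Inf)}"

definition Falg :: "(pt \<times> pt) set set" where
  "Falg = {Id_on (A \<union> B) | A B. A \<subseteq> {P} \<and> B \<in> Sfam} \<union> {fP}"

end

theory Submission
  imports Defs
begin

definition good :: "pt set \<Rightarrow> bool" where
  "good X \<longleftrightarrow> (finite (X - {P}) \<and> Inf \<notin> X) \<or> (finite (- X) \<and> Inf \<in> X)"

lemma Ninf_eq: "Ninf = - {P}"
proof (rule set_eqI)
  fix x show "x \<in> Ninf \<longleftrightarrow> x \<in> - {P}" by (cases x) (auto simp: Ninf_def)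
qed

lemma Falg_Id: "Id_on X \<in> Falg \<longleftrightarrow> good X"
proof
  assume a: "Id_on X \<in> Falg"
  have "Id_on X \<noteq> fP" unfolding fP_def Id_on_def by auto
  then have "Id_on X \<in> {Id_on (A \<union> B) | A B. A \<subseteq> {P} \<and> B \<in> Sfam}"
    using a unfolding Falg_def by blast
  then obtain A B where AB: "Id_on X = Id_on (A \<union> B)" "A \<subseteq> {P}" "B \<in> Sfam"
    by blast
  have X: "X = A \<union> B" using AB(1) by (metis Domain_Id_on)
  have BN: "B \<subseteq> - {P}" using AB(3) unfolding Sfam_def Ninf_eq by auto
  have e: "X - {P} = B" using X AB(2) BN by auto
  have e2: "- X = (- {P} - B) \<union> ({P} - A)" using X AB(2) BN by auto
  show "good X" using AB(3) unfolding Sfam_def Ninf_eq good_def e2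
    using e X by auto
next
  assume g: "good X"
  have "Id_on X = Id_on ((X \<inter> {P}) \<union> (X - {P}))" by (metis Int_Diff_Un)
  moreover have "X - {P} \<in> Sfam"
  proof -
    have "- {P} - (X - {P}) \<subseteq> - X" by auto
    then show ?thesis using g unfolding Sfam_def Ninf_eq good_def
      by (auto intro: finite_subset)
  qed
  ultimately show "Id_on X \<in> Falg" unfolding Falg_def by blast
qed

lemma Falg_cases: "f \<in> Falg \<Longrightarrow> (\<exists>X. good X \<and> f = Id_on X) \<or> f = fP"
proof -
  assume "f \<in> Falg"
  then have "f = fP \<or> (\<exists>A B. f = Id_on (A \<union> B) \<and> A \<subseteq> {P} \<and> B \<in> Sfam)"
    unfolding Falg_def by blast
  then show ?thesis
  proof
    assume "\<exists>A B. f = Id_on (A \<union> B) \<and> A \<subseteq> {P} \<and> B \<in> Sfam"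
    then obtain A B where "f = Id_on (A \<union> B)" "A \<subseteq> {P}" "B \<in> Sfam" by blast
    then have "f \<in> Falg" "f = Id_on (A \<union> B)" unfolding Falg_def by blast+
    then show ?thesis using Falg_Id by blast
  qed simp
qed

lemma good_Int: "good X \<Longrightarrow> good Y \<Longrightarrow> good (X \<inter> Y)"
  unfolding good_def by (auto intro: finite_subset)

lemma good_Compl: "good X \<Longrightarrow> good (- X)"
proof -
  assume g: "good X"
  have "X \<subseteq> (X - {P}) \<union> {P}" by auto
  then show ?thesis using g unfolding good_def by (auto intro: finite_subset)
qed

lemma good_UNIV: "good UNIV" unfolding good_def by auto
lemma good_empty: "good {}" unfolding good_def by auto

lemma fP_in: "fP \<in> Falg" unfolding Falg_def by blast

lemma empty_in: "{} \<in> Falg" using Falg_Id[of "{}"] good_empty by simp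

lemma base_Falg: "base Falg = UNIV"
proof -
  have "Id_on UNIV \<in> Falg" using Falg_Id good_UNIV by blast
  then show ?thesis unfolding base_def by auto
qed

lemma antidom_Id: "antidom UNIV (Id_on X) = Id_on (- X)"
  unfolding antidom_def Id_on_def by auto

lemma antidom_fP: "antidom UNIV fP = Id_on (- {P})"
  unfolding antidom_def Id_on_def fP_def by auto

lemma good_notP: "good (- {P})" unfolding good_def by auto

lemma closed_comp: "f \<in> Falg \<Longrightarrow> g \<in> Falg \<Longrightarrow> f O g \<in> Falg \<and> f \<inter> g \<in> Falg"
proof -
  assume f: "f \<in> Falg" and g: "g \<in> Falg"
  have c1: "Id_on X O Id_on Y = Id_on (X \<inter> Y)" for X Y by auto
  have c2: "Id_on X \<inter> Id_on Y = Id_on (X \<inter> Y)" for X Y by auto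
  have c3: "Id_on X O fP = (if P \<in> X then fP else {})" for X unfolding fP_def by auto
  have c4: "fP O Id_on X = (if Inf \<in> X then fP else {})" for X unfolding fP_def by auto
  have c5: "fP O fP = {}" "fP \<inter> fP = fP" unfolding fP_def by auto
  have c6: "Id_on X \<inter> fP = {}" "fP \<inter> Id_on X = {}" for X unfolding fP_def by auto
  have gI: "good X \<Longrightarrow> Id_on X \<in> Falg" for X using Falg_Id by blast
  from Falg_cases[OF f] show ?thesis
  proof
    assume "\<exists>X. good X \<and> f = Id_on X"
    then obtain X where X: "good X" "f = Id_on X" by blast
    from Falg_cases[OF g] show ?thesis
    proof
      assume "\<exists>X. good X \<and> g = Id_on X"
      then obtain Y where Y: "good Y" "g = Id_on Y" by blast
      show ?thesis unfolding X(2) Y(2) c1 c2 using gI good_Int X(1) Y(1) by blast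
    next
      assume ge: "g = fP" show ?thesis unfolding X(2) ge c3 c6 using fP_in empty_in by simp
    qed
  next
    assume fe: "f = fP"
    from Falg_cases[OF g] show ?thesis
    proof
      assume "\<exists>X. good X \<and> g = Id_on X"
      then obtain Y where Y: "good Y" "g = Id_on Y" by blast
      show ?thesis unfolding fe Y(2) c4 c6 using fP_in empty_in by simp
    next
      assume ge: "g = fP" show ?thesis unfolding fe ge c5 using fP_in empty_in by simp
    qed
  qed
qed

lemma closed_ad: "f \<in> Falg \<Longrightarrow> antidom (base Falg) f \<in> Falg"
proof -
  assume f: "f \<in> Falg"
  from Falg_cases[OF f] show ?thesis
  proof
    assume "\<exists>X. good X \<and> f = Id_on X"
    then obtain X where X: "good X" "f = Id_on X" by blast
    show ?thesis unfolding base_Falg X(2) antidom_Id using Falg_Id good_Compl X(1) by blast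
  next
    assume fe: "f = fP" show ?thesis unfolding fe base_Falg antidom_fP using Falg_Id good_notP by blast
  qed
qed

lemma pfun: "pfun_alg Falg"
proof -
  have "single_valued f" if "f \<in> Falg" for f
    using Falg_cases[OF that] unfolding single_valued_def fP_def by auto
  then show ?thesis unfolding pfun_alg_def using closed_comp closed_ad by blast
qed

lemma zero_empty: "is_zero Falg (\<inter>) z \<Longrightarrow> z = {}"
  unfolding is_zero_def leq_def using empty_in by auto

lemma atomicF: "atomic_alg Falg (\<inter>)"
  unfolding atomic_alg_def
proof (intro ballI impI)
  fix a assume a: "a \<in> Falg" "\<not> is_zero Falg (\<inter>) a"
  have ne: "a \<noteq> {}" using a(2) empty_in unfolding is_zero_def leq_def by auto
  have atom_single: "is_atom Falg (\<inter>) (Id_on {z})" if "good {z}" for z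
    unfolding is_atom_def
  proof (intro conjI ballI impI)
    show "Id_on {z} \<in> Falg" using that Falg_Id by blast
    show "\<not> is_zero Falg (\<inter>) (Id_on {z})" using zero_empty by auto
    fix b assume "b \<in> Falg" "leq (\<inter>) b (Id_on {z})"
    then have "b \<subseteq> Id_on {z}" unfolding leq_def by auto
    then have "b = {} \<or> b = Id_on {z}" by auto
    then show "b = Id_on {z} \<or> is_zero Falg (\<inter>) b"
      unfolding is_zero_def leq_def using empty_in by auto
  qed
  show "\<exists>b. is_atom Falg (\<inter>) b \<and> leq (\<inter>) b a"
    using Falg_cases[OF a(1)]
  proof
    assume "a = fP"
    moreover have "is_atom Falg (\<inter>) fP"
      unfolding is_atom_def
    proof (intro conjI ballI impI)
      show "fP \<in> Falg" by (rule fP_in)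
      show "\<not> is_zero Falg (\<inter>) fP" using zero_empty unfolding fP_def by auto
      fix b assume "b \<in> Falg" "leq (\<inter>) b fP"
      then have "b \<subseteq> fP" unfolding leq_def by auto
      then have "b = {} \<or> b = fP" unfolding fP_def by auto
      then show "b = fP \<or> is_zero Falg (\<inter>) b"
        unfolding is_zero_def leq_def using empty_in by auto
    qed
    ultimately show ?thesis unfolding leq_def by auto
  next
    assume "\<exists>X. good X \<and> a = Id_on X"
    then obtain X where X: "good X" "a = Id_on X" by blast
    have "\<exists>z\<in>X. z \<noteq> Inf"
    proof (rule ccontr)
      assume "\<not> ?thesis"
      then have "X \<subseteq> {Inf}" by auto
      moreover have "X \<noteq> {}" using ne X by auto
      ultimately have "X = {Inf}" by auto
      then have "finite (- {Inf})" using X(1) unfolding good_def by auto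
      moreover have "range N \<subseteq> - {Inf}" by auto
      ultimately show False
        by (metis finite_subset finite_imageD inj_def pt.inject infinite_UNIV_nat)
    qed
    then obtain z where z: "z \<in> X" "z \<noteq> Inf" by blast
    have "good {z}" using z unfolding good_def by auto
    then show ?thesis using atom_single z X unfolding leq_def by auto
  qed
qed

lemma repId: "is_rep Falg (\<lambda>f g. f O g) (\<inter>) (antidom (base Falg)) (\<lambda>f. f)"
  unfolding is_rep_def is_alg_def using pfun closed_comp closed_ad by auto

lemma key:
  assumes c: "c \<in> Falg" and sub: "\<forall>n. c \<subseteq> Id_on (- {P, N n})"
  shows "c = {}"
  using Falg_cases[OF c]
proof
  assume "c = fP" then show ?thesis using sub unfolding fP_def Id_on_def by auto
next
  assume "\<exists>X. good X \<and> c = Id_on X"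
  then obtain X where X: "good X" "c = Id_on X" by blast
  have "X \<subseteq> - {P, N n}" for n using sub X by auto
  then have sX: "X \<subseteq> {Inf}"
  proof (intro subsetI)
    fix z assume "\<And>n. X \<subseteq> - {P, N n}" "z \<in> X"
    then show "z \<in> {Inf}" by (cases z) auto
  qed
  show ?thesis
  proof (cases "Inf \<in> X")
    case True
    then have "finite (- X)" using X(1) unfolding good_def by auto
    moreover have "range N \<subseteq> - X" using sX by auto
    ultimately show ?thesis
      by (metis finite_subset finite_imageD inj_def pt.inject infinite_UNIV_nat)
  next
    case False then show ?thesis using sX X by auto
  qed
qed

lemma good_cofin: "good (- {P, N n})" unfolding good_def by auto

lemma norep:
  fixes \<theta> :: "(pt \<times> pt) set \<Rightarrow> ('c \<times> 'c) set"
  assumes rep: "is_rep Falg (\<lambda>f g. f O g) (\<inter>) (antidom (base Falg)) \<theta>"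
  shows "\<not> atomic_rep Falg (\<inter>) \<theta> \<and> \<not> complete_rep Falg (\<inter>) \<theta>"
proof -
  have inj: "inj_on \<theta> Falg" using rep unfolding is_rep_def by auto
  have hc: "\<And>a b. a \<in> Falg \<Longrightarrow> b \<in> Falg \<Longrightarrow> \<theta> (a O b) = \<theta> a O \<theta> b \<and> \<theta> (a \<inter> b) = \<theta> a \<inter> \<theta> b"
    using rep unfolding is_rep_def by auto
  define B' where "B' = base (\<theta> ` Falg)"
  have ha: "\<And>a. a \<in> Falg \<Longrightarrow> \<theta> (antidom UNIV a) = antidom B' (\<theta> a)"
    using rep base_Falg unfolding is_rep_def B'_def by auto
  have diag: "a = b" if "good X" "(a, b) \<in> \<theta> (Id_on X)" for X a b
  proof -
    have "Id_on X = antidom UNIV (Id_on (- X))" by (metis antidom_Id double_compl)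
    moreover have "Id_on (- X) \<in> Falg" using that(1) good_Compl Falg_Id by blast
    ultimately have "\<theta> (Id_on X) = antidom B' (\<theta> (Id_on (- X)))" using ha by simp
    then show ?thesis using that(2) unfolding antidom_def by auto
  qed
  have z: "\<theta> {} = {}"
  proof -
    have "{} = fP \<inter> antidom UNIV fP" unfolding antidom_fP unfolding fP_def by auto
    moreover have "antidom UNIV fP \<in> Falg" using closed_ad[OF fP_in] base_Falg by simp
    ultimately have "\<theta> {} = \<theta> fP \<inter> antidom B' (\<theta> fP)"
      using hc[OF fP_in] ha[OF fP_in] by metis
    then show ?thesis unfolding antidom_def by auto
  qed
  have "\<theta> fP \<noteq> {}"
  proof
    assume "\<theta> fP = {}"
    then have "\<theta> fP = \<theta> {}" using z by simp
    then have "fP = {}" using inj fP_in empty_in unfolding inj_on_def by blast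
    then show False unfolding fP_def by auto
  qed
  then obtain x y where xy: "(x, y) \<in> \<theta> fP" by auto
  have yB: "(y, y) \<in> \<theta> (Id_on B)" if "good B" "Inf \<in> B" for B
  proof -
    have I: "Id_on B \<in> Falg" using that Falg_Id by blast
    have "fP O Id_on B = fP" using that unfolding fP_def by auto
    then have eq: "\<theta> fP = \<theta> fP O \<theta> (Id_on B)" using hc[OF fP_in I] by simp
    have "(x, y) \<in> \<theta> fP O \<theta> (Id_on B)" using xy unfolding eq[symmetric] .
    then obtain w where "(x, w) \<in> \<theta> fP" "(w, y) \<in> \<theta> (Id_on B)" by blast
    then show ?thesis using diag[OF that(1)] by metis
  qed
  have yn: "(y, y) \<in> \<theta> (Id_on (- {P, N n}))" for n using yB good_cofin by auto
  have In: "Id_on (- {P, N n}) \<in> Falg" for n using good_cofin Falg_Id by blast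
  have na: "\<not> atomic_rep Falg (\<inter>) \<theta>"
  proof
    assume "atomic_rep Falg (\<inter>) \<theta>"
    moreover have "Id_on (- {P}) \<in> Falg" using good_notP Falg_Id by blast
    moreover have "(y, y) \<in> \<theta> (Id_on (- {P}))" using yB good_notP by auto
    ultimately obtain b where b: "is_atom Falg (\<inter>) b" "(y, y) \<in> \<theta> b"
      unfolding atomic_rep_def by blast
    have bF: "b \<in> Falg" using b(1) unfolding is_atom_def by auto
    have "b \<subseteq> Id_on (- {P, N n})" for n
    proof -
      let ?c = "b \<inter> Id_on (- {P, N n})"
      have cF: "?c \<in> Falg" using closed_comp[OF bF In] by auto
      have "(y, y) \<in> \<theta> ?c" using hc[OF bF In] b(2) yn by auto
      then have "\<not> is_zero Falg (\<inter>) ?c" using zero_empty z by fastforce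
      moreover have "leq (\<inter>) ?c b" unfolding leq_def by auto
      ultimately have "?c = b" using b(1) cF unfolding is_atom_def by blast
      then show ?thesis by blast
    qed
    then have "b = {}" using key bF by blast
    then show False using b(2) z by simp
  qed
  have nc: "\<not> complete_rep Falg (\<inter>) \<theta>"
  proof
    assume cr: "complete_rep Falg (\<inter>) \<theta>"
    let ?T = "range (\<lambda>n. Id_on (- {P, N n}))"
    have "is_inf Falg (\<inter>) ?T {}"
      unfolding is_inf_def leq_def
    proof (intro conjI ballI impI)
      show "{} \<in> Falg" by (rule empty_in)
      fix c assume c: "c \<in> Falg" "\<forall>t\<in>?T. c \<inter> t = c"
      have "\<forall>n. c \<subseteq> Id_on (- {P, N n})"
      proof
        fix n
        have "c \<inter> Id_on (- {P, N n}) = c" using c(2) by blast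
        then show "c \<subseteq> Id_on (- {P, N n})" by blast
      qed
      then have "c = {}" using key[OF c(1)] by blast
      then show "c \<inter> {} = c" by simp
    next
      fix t show "{} \<inter> t = {}" by simp
    qed
    moreover have "?T \<subseteq> Falg" using In by blast
    moreover have "?T \<noteq> {}" by blast
    ultimately have "\<theta> {} = (\<Inter>t\<in>?T. \<theta> t)" using cr unfolding complete_rep_def by blast
    moreover have "(y, y) \<in> (\<Inter>t\<in>?T. \<theta> t)" using yn by blast
    ultimately have "(y, y) \<in> \<theta> {}" by simp
    then show False using z by simp
  qed
  show ?thesis using na nc by simp
qed

theorem mainTheorem11:
  shows "pfun_alg Falg
    \<and> is_rep Falg (\<lambda>f g. f O g) (\<inter>) (antidom (base Falg)) (\<lambda>f. f)
    \<and> atomic_alg Falg (\<inter>)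
    \<and> (\<forall>\<theta> :: (pt \<times> pt) set \<Rightarrow> ('c \<times> 'c) set.
          is_rep Falg (\<lambda>f g. f O g) (\<inter>) (antidom (base Falg)) \<theta> \<longrightarrow>
          \<not> atomic_rep Falg (\<inter>) \<theta> \<and> \<not> complete_rep Falg (\<inter>) \<theta>)"
  using pfun repId atomicF norep by blast

end
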